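(* Let $m\ge 2$ and $\alpha\in[0,1]$. There exists a deterministic voting rule $f$ such that every election $\mathcal E=(N,A,\vec\sigma)$ with $m$ alternatives, in which every agent $i$ has an intensity rank $\ell_i\in[m-1]$, satisfies $$\mathsf{dist}_\alpha(f(\vec\sigma),\mathcal E)\le 2+\max(\alpha,t_{\ell_{\max}}),\qquad\text{where } \ell_{\max}=\max_{i\in N}\ell_i.$$
   Context: An election $\mathcal E=(N,A,\vec\sigma)$ has $n$ agents $N$, $m$ alternatives $A$, and $\sigma_i=(\pi_i,\Join_i)$, where $\pi_i:[m]\to A$ is a bijection ($\pi_i(1)$ most preferred) and $\Join_i:[m-1]\to\{\succ,\succ\!\!\succ\}$. A metric $d$ on $N\cup A$ is nonnegative and symmetric, satisfies the triangle inequality, and has $d(x,x)=0$. The profile $\vec\sigma$ is $\alpha$-consistent with $d$ (mandatory elicitation) if for all $i$ and $j\in[m-1]$: - $\Join_i(j)=\,\succ$ implies $d(i,\pi_i(j+1))\ge d(i,\pi_i(j))>\alpha d(i,\pi_i(j+1))$; - $\Join_i(j)=\,\succ\!\!\succ$ implies $d(i,\pi_i(j))\le\alpha d(i,\pi_i(j+1))$. $\mathsf{dist}_\alpha(a,\mathcal E)=\sup_d \sum_i d(i,a)/\min_b\sum_i d(i,b)$, with the supremum over $\alpha$-consistent $d$. A preference $(\pi,\Join)$ is moderate-up-to-$k$ if $\Join(k+1)=\,\succ\!\!\succ$ and $\Join(i)=\,\succ$ for all $i\in[k]$; it is moderate-up-to-$(m-1)$ if $\Join$ contains no $\succ\!\!\succ$.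 The intensity rank $\ell_i$ of agent $i$ is the $k$ for which $\sigma_i$ is moderate-up-to-$k$. Define - $w_1=\frac{\alpha+1}{3\alpha+1}$ and $t_1=\frac{1-\alpha}{3\alpha+1}$; - for $k>1$: $w_k=1-\frac{2\alpha}{(1-\alpha)t_{k-1}+2w_{k-1}+2\alpha}$ and $t_k=w_k+(1-w_k)t_{k-1}$. *)

theory Defs
  imports Complex_Main "HOL-Library.Extended_Real"
begin

text \<open>A preference (pi, J): pi :: nat => 'a is the ranking on positions 1..m
  (pi 1 most preferred), J :: nat => bool gives the separators on positions 1..m-1,
  where J j = True means strong (succ succ) and J j = False means weak (succ).\<close>

type_synonym 'a pref = "(nat \<Rightarrow> 'a) \<times> (nat \<Rightarrow> bool)"

definition valid_profile :: "nat \<Rightarrow> 'n set \<Rightarrow> 'a set \<Rightarrow> ('n \<Rightarrow> 'a pref) \<Rightarrow> bool" where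
  "valid_profile m N A \<sigma> \<longleftrightarrow> finite N \<and> N \<noteq> {} \<and> finite A \<and> card A = m \<and>
     (\<forall>i\<in>N. bij_betw (fst (\<sigma> i)) {1..m} A)"

definition is_metric_on :: "('x \<Rightarrow> 'x \<Rightarrow> real) \<Rightarrow> 'x set \<Rightarrow> bool" where
  "is_metric_on d S \<longleftrightarrow>
     (\<forall>x\<in>S. \<forall>y\<in>S. d x y \<ge> 0) \<and>
     (\<forall>x\<in>S. \<forall>y\<in>S. d x y = d y x) \<and>
     (\<forall>x\<in>S. d x x = 0) \<and>
     (\<forall>x\<in>S. \<forall>y\<in>S. \<forall>z\<in>S. d x z \<le> d x y + d y z)"

definition alpha_consistent ::
  "real \<Rightarrow> nat \<Rightarrow> 'n set \<Rightarrow> 'a set \<Rightarrow> ('n \<Rightarrow> 'a pref) \<Rightarrow> ('n + 'a \<Rightarrow> 'n + 'a \<Rightarrow> real) \<Rightarrow> bool" where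
  "alpha_consistent \<alpha> m N A \<sigma> d \<longleftrightarrow>
     is_metric_on d (Inl ` N \<union> Inr ` A) \<and>
     (\<forall>i\<in>N. \<forall>j\<in>{1..m-1}.
        let \<pi> = fst (\<sigma> i); J = snd (\<sigma> i) in
        (\<not> J j \<longrightarrow> d (Inl i) (Inr (\<pi> (j+1))) \<ge> d (Inl i) (Inr (\<pi> j)) \<and>
                    d (Inl i) (Inr (\<pi> j)) > \<alpha> * d (Inl i) (Inr (\<pi> (j+1)))) \<and>
        (J j \<longrightarrow> d (Inl i) (Inr (\<pi> j)) \<le> \<alpha> * d (Inl i) (Inr (\<pi> (j+1)))))"

definition social_cost :: "'n set \<Rightarrow> ('n + 'a \<Rightarrow> 'n + 'a \<Rightarrow> real) \<Rightarrow> 'a \<Rightarrow> real" where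
  "social_cost N d a = (\<Sum>i\<in>N. d (Inl i) (Inr a))"

definition distortion ::
  "real \<Rightarrow> nat \<Rightarrow> 'n set \<Rightarrow> 'a set \<Rightarrow> ('n \<Rightarrow> 'a pref) \<Rightarrow> 'a \<Rightarrow> ereal" where
  "distortion \<alpha> m N A \<sigma> a =
     (SUP d \<in> {d. alpha_consistent \<alpha> m N A \<sigma> d}.
        ereal (social_cost N d a / (MIN b\<in>A. social_cost N d b)))"

definition moderate_up_to :: "nat \<Rightarrow> (nat \<Rightarrow> bool) \<Rightarrow> nat \<Rightarrow> bool" where
  "moderate_up_to m J k \<longleftrightarrow>
     (if k = m - 1 then (\<forall>j\<in>{1..m-1}. \<not> J j)
      else J (k+1) \<and> (\<forall>j\<in>{1..k}. \<not> J j))"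

definition intensity_rank :: "nat \<Rightarrow> (nat \<Rightarrow> bool) \<Rightarrow> nat" where
  "intensity_rank m J = (THE k. k \<in> {1..m-1} \<and> moderate_up_to m J k)"

text \<open>wt alpha k = (w_(k+1), t_(k+1)).\<close>
primrec wt :: "real \<Rightarrow> nat \<Rightarrow> real \<times> real" where
  "wt \<alpha> 0 = ((\<alpha>+1)/(3*\<alpha>+1), (1-\<alpha>)/(3*\<alpha>+1))"
| "wt \<alpha> (Suc k) =
     (let w = fst (wt \<alpha> k); t = snd (wt \<alpha> k);
          w' = 1 - 2*\<alpha> / ((1-\<alpha>)*t + 2*w + 2*\<alpha>)
      in (w', w' + (1 - w') * t))"

definition w_seq :: "real \<Rightarrow> nat \<Rightarrow> real" where
  "w_seq \<alpha> k = fst (wt \<alpha> (k - 1))"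

definition t_seq :: "real \<Rightarrow> nat \<Rightarrow> real" where
  "t_seq \<alpha> k = snd (wt \<alpha> (k - 1))"

end

theory Submission
  imports Defs
begin


fun WT :: "real \<Rightarrow> nat \<Rightarrow> real \<times> real" where
  "WT \<alpha> 0 = (1, -1)"
| "WT \<alpha> (Suc k) =
     (let w = fst (WT \<alpha> k); t = snd (WT \<alpha> k);
          w' = 1 - 2*\<alpha> / ((1-\<alpha>)*t + 2*w + 2*\<alpha>)
      in (w', w' + (1 - w') * t))"

definition WW :: "real \<Rightarrow> nat \<Rightarrow> real" where "WW \<alpha> k = fst (WT \<alpha> k)"
definition TT :: "real \<Rightarrow> nat \<Rightarrow> real" where "TT \<alpha> k = snd (WT \<alpha> k)"

lemma WW_Suc: "WW \<alpha> (Suc k) = 1 - 2*\<alpha> / ((1-\<alpha>)*TT \<alpha> k + 2*WW \<alpha> k + 2*\<alpha>)"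
  by (simp add: WW_def TT_def Let_def)

lemma TT_Suc: "TT \<alpha> (Suc k) = WW \<alpha> (Suc k) + (1 - WW \<alpha> (Suc k)) * TT \<alpha> k"
  by (simp add: WW_def TT_def Let_def)

lemma WW_0[simp]: "WW \<alpha> 0 = 1" and TT_0[simp]: "TT \<alpha> 0 = -1"
  by (simp_all add: WW_def TT_def)

lemma wt_eq: assumes "0 \<le> \<alpha>" shows "wt \<alpha> k = WT \<alpha> (Suc k)"
proof (induction k)
  case 0
  have "1 + 3*\<alpha> \<noteq> 0" using assms by linarith
  then show ?case using assms by (simp add: Let_def field_simps)
next
  case (Suc k)
  show ?case by (subst WT.simps(2), simp only: wt.simps Suc.IH)
qed

lemma t_seq_eq: assumes "0 \<le> \<alpha>" "1 \<le> k" shows "t_seq \<alpha> k = TT \<alpha> k"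
  using assms wt_eq[OF assms(1), of "k - 1"] by (simp add: t_seq_def TT_def)

lemma inv:
  assumes "0 \<le> \<alpha>" "\<alpha> \<le> 1"
  shows "0 \<le> WW \<alpha> k \<and> WW \<alpha> k \<le> 1 \<and> -1 \<le> TT \<alpha> k \<and> TT \<alpha> k \<le> 1 \<and>
     (1 \<le> k \<longrightarrow> 0 \<le> TT \<alpha> k) \<and>
     (1-\<alpha>)*TT \<alpha> k + 2*WW \<alpha> k + 2*\<alpha> \<ge> 2*\<alpha> \<and>
     (1-\<alpha>)*TT \<alpha> k + 2*WW \<alpha> k + 2*\<alpha> > 0 \<and>
     0 \<le> 2 * WW \<alpha> k + TT \<alpha> k \<and> (\<alpha> = 0 \<longrightarrow> WW \<alpha> k = 1)"
proof (induction k)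
  case 0
  then show ?case using assms by simp
next
  case (Suc k)
  define D where "D = (1-\<alpha>)*TT \<alpha> k + 2*WW \<alpha> k + 2*\<alpha>"
  define u where "u = 2*\<alpha> / D"
  have D: "D \<ge> 2*\<alpha>" "D > 0" using Suc by (simp_all add: D_def)
  have u0: "0 \<le> u" using D assms by (simp add: u_def)
  have u1: "u \<le> 1" using D assms by (simp add: u_def divide_le_eq_1)
  have W: "WW \<alpha> (Suc k) = 1 - u" by (simp add: WW_Suc u_def D_def)
  have T: "TT \<alpha> (Suc k) = (1 - u) + u * TT \<alpha> k" by (simp add: TT_Suc W)
  have Tk: "-1 \<le> TT \<alpha> k" "TT \<alpha> k \<le> 1" using Suc by auto
  have "u * TT \<alpha> k \<le> u * 1" using Tk u0 by (intro mult_left_mono) auto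
  then have T1: "TT \<alpha> (Suc k) \<le> 1" unfolding T by simp
  have "u * (-1) \<le> u * TT \<alpha> k" using Tk u0 by (intro mult_left_mono) auto
  then have Tm1: "-1 \<le> TT \<alpha> (Suc k)" unfolding T using u1 by simp
  have T0: "0 \<le> TT \<alpha> (Suc k)"
  proof (cases "k = 0")
    case True
    have "1 + 3*\<alpha> \<noteq> 0" using assms by linarith
    have "D = 1 + 3*\<alpha>" using True by (simp add: D_def algebra_simps)
    then have "TT \<alpha> (Suc k) = 1 - 2 * (2*\<alpha>/(1+3*\<alpha>))" using True T
      by (simp add: u_def)
    also have "\<dots> = (1 - \<alpha>)/(1+3*\<alpha>)" using \<open>1 + 3*\<alpha> \<noteq> 0\<close>
      by (simp add: field_simps)
    finally have "TT \<alpha> (Suc k) = (1 - \<alpha>)/(1+3*\<alpha>)" .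
    then show ?thesis using assms by simp
  next
    case False
    then have "0 \<le> TT \<alpha> k" using Suc by simp
    then show ?thesis unfolding T using u0 u1 by simp
  qed
  have a0: "\<alpha> = 0 \<longrightarrow> WW \<alpha> (Suc k) = 1"
  proof
    assume h: "\<alpha> = 0"
    have "u = 0" using h by (simp add: u_def)
    then show "WW \<alpha> (Suc k) = 1" using W by simp
  qed
  have P: "(1-\<alpha>)*TT \<alpha> (Suc k) \<ge> 0" using T0 assms by simp
  have "\<alpha> = 0 \<or> \<alpha> > 0" using assms by auto
  then show ?case using T0 T1 Tm1 u0 u1 W assms P a0
    by (intro conjI; elim disjE; linarith?; simp)
qed

lemma ident:
  assumes "0 \<le> \<alpha>" "\<alpha> \<le> 1"
  shows "(1 - WW \<alpha> (Suc k)) * (\<alpha> + 2*WW \<alpha> k + TT \<alpha> k) = \<alpha> * (1 + TT \<alpha> (Suc k))"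
proof -
  define D where "D = (1-\<alpha>)*TT \<alpha> k + 2*WW \<alpha> k + 2*\<alpha>"
  define u where "u = 2*\<alpha> / D"
  have D: "D > 0" using inv[OF assms, of k] by (simp add: D_def)
  have W: "WW \<alpha> (Suc k) = 1 - u" by (simp add: WW_Suc u_def D_def)
  have T: "TT \<alpha> (Suc k) = (1 - u) + u * TT \<alpha> k" by (simp add: TT_Suc W)
  have "u * D = 2 * \<alpha>" using D by (simp add: u_def)
  then show ?thesis unfolding W T D_def by (simp add: algebra_simps)
qed

lemma TT_mono_Suc: assumes "0 \<le> \<alpha>" "\<alpha> \<le> 1" shows "TT \<alpha> k \<le> TT \<alpha> (Suc k)"
proof -
  have "TT \<alpha> (Suc k) - TT \<alpha> k = WW \<alpha> (Suc k) * (1 - TT \<alpha> k)"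
    by (simp add: TT_Suc algebra_simps)
  moreover have "WW \<alpha> (Suc k) * (1 - TT \<alpha> k) \<ge> 0"
    using inv[OF assms, of k] inv[OF assms, of "Suc k"] by simp
  ultimately show ?thesis by simp
qed

lemma TT_mono: assumes "0 \<le> \<alpha>" "\<alpha> \<le> 1" "i \<le> j" shows "TT \<alpha> i \<le> TT \<alpha> j"
  using assms(3)
proof (induction j)
  case 0 then show ?case by simp
next
  case (Suc j)
  then show ?case using TT_mono_Suc[OF assms(1,2), of j] le_Suc_eq by fastforce
qed



fun pw :: "real \<Rightarrow> nat \<Rightarrow> nat \<Rightarrow> real" where
  "pw \<alpha> 0 s = (if s = 1 then 1 else 0)"
| "pw \<alpha> (Suc k) s = (if s = 1 then WW \<alpha> (Suc k) else if s = 0 then 0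
      else (1 - WW \<alpha> (Suc k)) * pw \<alpha> k (s - 1))"

lemma pw_nonneg: assumes "0 \<le> \<alpha>" "\<alpha> \<le> 1" shows "0 \<le> pw \<alpha> k s"
proof (induction k arbitrary: s)
  case 0 then show ?case by simp
next
  case (Suc k)
  have "0 \<le> WW \<alpha> (Suc k)" "WW \<alpha> (Suc k) \<le> 1" using inv[OF assms, of "Suc k"] by auto
  then show ?case using Suc[of "s - 1"] by simp
qed

lemma pw_zero: "s = 0 \<or> s > k + 1 \<Longrightarrow> pw \<alpha> k s = 0"
proof (induction k arbitrary: s)
  case 0 then show ?case by auto
next
  case (Suc k)
  then show ?case using Suc.IH[of "s - 1"] by auto
qed

lemma pw_split:
  "(\<Sum>s\<in>{1..Suc k + 1}. pw \<alpha> (Suc k) s * f s) =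
     WW \<alpha> (Suc k) * f 1 + (1 - WW \<alpha> (Suc k)) * (\<Sum>s\<in>{1..k+1}. pw \<alpha> k s * f (s+1))"
proof -
  have "{1..Suc k + 1} = insert 1 {Suc 1..Suc (k+1)}" by auto
  then have "(\<Sum>s\<in>{1..Suc k + 1}. pw \<alpha> (Suc k) s * f s) =
      pw \<alpha> (Suc k) 1 * f 1 + (\<Sum>s\<in>{Suc 1..Suc (k+1)}. pw \<alpha> (Suc k) s * f s)"
    by simp
  also have "(\<Sum>s\<in>{Suc 1..Suc (k+1)}. pw \<alpha> (Suc k) s * f s) =
      (\<Sum>s\<in>{1..k+1}. pw \<alpha> (Suc k) (Suc s) * f (Suc s))"
    by (rule sum.shift_bounds_cl_Suc_ivl)
  also have "\<dots> = (\<Sum>s\<in>{1..k+1}. (1 - WW \<alpha> (Suc k)) * (pw \<alpha> k s * f (s+1)))"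
    by (intro sum.cong) auto
  also have "\<dots> = (1 - WW \<alpha> (Suc k)) * (\<Sum>s\<in>{1..k+1}. pw \<alpha> k s * f (s+1))"
    by (rule sum_distrib_left[symmetric])
  also have "pw \<alpha> (Suc k) 1 = WW \<alpha> (Suc k)" by simp
  finally show ?thesis .
qed

lemma pw_sum: "(\<Sum>s\<in>{1..k+1}. pw \<alpha> k s) = 1"
proof (induction k)
  case 0 then show ?case by simp
next
  case (Suc k)
  have "(\<Sum>s\<in>{1..Suc k+1}. pw \<alpha> (Suc k) s) = (\<Sum>s\<in>{1..Suc k+1}. pw \<alpha> (Suc k) s * 1)" by simp
  also have "\<dots> = 1" unfolding pw_split using Suc by simp
  finally show ?case .
qed

definition chain :: "real \<Rightarrow> nat \<Rightarrow> (nat \<Rightarrow> real) \<Rightarrow> bool" where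
  "chain \<alpha> k x \<longleftrightarrow> (\<forall>s\<in>{1..k}. \<alpha> * x (s+1) < x s \<and> x s \<le> x (s+1))"

lemma chain_shift: "chain \<alpha> (Suc k) x \<Longrightarrow> chain \<alpha> k (\<lambda>s. x (s+1)) \<and> \<alpha> * x 2 < x 1 \<and> x 1 \<le> x 2"
  unfolding chain_def by (auto simp: numeral_2_eq_2)

lemma mono_steps:
  fixes x :: "nat \<Rightarrow> real"
  shows "(\<And>s. lo \<le> s \<Longrightarrow> s < hi \<Longrightarrow> x s \<le> x (s+1)) \<Longrightarrow> lo \<le> i \<Longrightarrow> i \<le> j \<Longrightarrow> j \<le> hi \<Longrightarrow> x i \<le> x j"
proof (induction j)
  case 0 then show ?case by simp
next
  case (Suc j)
  show ?case
  proof (cases "i = Suc j")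
    case True then show ?thesis by simp
  next
    case False
    then have "i \<le> j" using Suc by simp
    then have "x i \<le> x j" using Suc by simp
    also have "x j \<le> x (j+1)" using Suc.prems(1)[of j] Suc.prems \<open>i \<le> j\<close> by simp
    finally show ?thesis by simp
  qed
qed

lemma chain_mono: "chain \<alpha> k x \<Longrightarrow> 1 \<le> r \<Longrightarrow> r \<le> k + 1 \<Longrightarrow> x 1 \<le> x r"
  by (rule mono_steps[of 1 "k+1" x]) (auto simp: chain_def)

lemma blockB:
  assumes "0 \<le> \<alpha>" "\<alpha> \<le> 1"
  shows "chain \<alpha> k x \<Longrightarrow> (\<forall>s\<in>{1..k+1}. 0 \<le> x s) \<Longrightarrow>
    (\<Sum>s\<in>{1..k+1}. pw \<alpha> k s * x s) \<le> (2 * WW \<alpha> k + TT \<alpha> k) * x 1"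
proof (induction k arbitrary: x)
  case 0 then show ?case by simp
next
  case (Suc k)
  define x' where "x' = (\<lambda>s. x (s+1))"
  have ch: "chain \<alpha> k x'" "\<alpha> * x 2 < x 1" "x 1 \<le> x 2"
    using chain_shift[OF Suc.prems(1)] by (auto simp: x'_def)
  have nn: "\<forall>s\<in>{1..k+1}. 0 \<le> x' s" using Suc.prems(2) by (auto simp: x'_def)
  define S where "S = (\<Sum>s\<in>{1..k+1}. pw \<alpha> k s * x' s)"
  have IH: "S \<le> (2 * WW \<alpha> k + TT \<alpha> k) * x' 1" using Suc.IH[OF ch(1) nn] by (simp add: S_def)
  have x1: "0 \<le> x 1" using Suc.prems(2) by auto
  note I0 = inv[OF assms, of k]
  note I1 = inv[OF assms, of "Suc k"]
  have id: "(1 - WW \<alpha> (Suc k)) * (\<alpha> + 2*WW \<alpha> k + TT \<alpha> k) = \<alpha> * (1 + TT \<alpha> (Suc k))"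
    by (rule ident[OF assms])
  have TS: "TT \<alpha> (Suc k) = WW \<alpha> (Suc k) + (1 - WW \<alpha> (Suc k)) * TT \<alpha> k" by (rule TT_Suc)
  have lhs: "(\<Sum>s\<in>{1..Suc k+1}. pw \<alpha> (Suc k) s * x s) = WW \<alpha> (Suc k) * x 1 + (1 - WW \<alpha> (Suc k)) * S"
    unfolding pw_split S_def x'_def by simp
  show ?case
  proof (cases "\<alpha> = 0")
    case True
    then have "WW \<alpha> (Suc k) = 1" using I1 by simp
    then show ?thesis unfolding lhs using I1 x1 by (simp add: algebra_simps)
  next
    case False
    then have ap: "\<alpha> > 0" using assms by simp
    have E0: "0 \<le> 2 * WW \<alpha> k + TT \<alpha> k" using I0 by simp
    have "\<alpha> * S \<le> \<alpha> * ((2 * WW \<alpha> k + TT \<alpha> k) * x 2)"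
      using IH ap by (simp add: x'_def numeral_2_eq_2)
    also have "\<dots> = (2 * WW \<alpha> k + TT \<alpha> k) * (\<alpha> * x 2)" by simp
    also have "\<dots> \<le> (2 * WW \<alpha> k + TT \<alpha> k) * x 1"
      using ch(2) E0 by (intro mult_left_mono) auto
    finally have aS: "\<alpha> * S \<le> (2 * WW \<alpha> k + TT \<alpha> k) * x 1" .
    have u0: "0 \<le> 1 - WW \<alpha> (Suc k)" using I1 by simp
    have "\<alpha> * ((1 - WW \<alpha> (Suc k)) * S) = (1 - WW \<alpha> (Suc k)) * (\<alpha> * S)" by simp
    also have "\<dots> \<le> (1 - WW \<alpha> (Suc k)) * ((2 * WW \<alpha> k + TT \<alpha> k) * x 1)"
      using aS u0 by (rule mult_left_mono)
    also have "\<dots> = (\<alpha> * (1 + TT \<alpha> (Suc k)) - (1 - WW \<alpha> (Suc k)) * \<alpha>) * x 1"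
    proof -
      have "(1 - WW \<alpha> (Suc k)) * (2 * WW \<alpha> k + TT \<alpha> k) =
          (1 - WW \<alpha> (Suc k)) * (\<alpha> + 2*WW \<alpha> k + TT \<alpha> k) - (1 - WW \<alpha> (Suc k)) * \<alpha>"
        by (simp add: algebra_simps)
      also have "\<dots> = \<alpha> * (1 + TT \<alpha> (Suc k)) - (1 - WW \<alpha> (Suc k)) * \<alpha>" using id by simp
      finally show ?thesis by (simp only: mult.assoc[symmetric])
    qed
    also have "\<dots> = \<alpha> * ((2 * WW \<alpha> (Suc k) + (1 - WW \<alpha> (Suc k)) * TT \<alpha> k) * x 1)"
      unfolding TS by (simp add: algebra_simps)
    finally have "(1 - WW \<alpha> (Suc k)) * S \<le> (2 * WW \<alpha> (Suc k) + (1 - WW \<alpha> (Suc k)) * TT \<alpha> k) * x 1"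
      using ap by simp
    then show ?thesis unfolding lhs TS by (simp add: algebra_simps)
  qed
qed

lemma blockA:
  assumes "0 \<le> \<alpha>" "\<alpha> \<le> 1"
  shows "chain \<alpha> k x \<Longrightarrow> (\<forall>s\<in>{1..k+1}. 0 \<le> x s) \<Longrightarrow> r \<in> {1..k+1} \<Longrightarrow> g r = 0 \<Longrightarrow>
    (\<forall>s\<in>{1..k+1}. g s \<le> x r + x s) \<Longrightarrow>
    (\<Sum>s\<in>{1..k+1}. pw \<alpha> k s * g s) \<le> (1 + TT \<alpha> k) * x r"
proof (induction k arbitrary: x g r)
  case 0 then show ?case by simp
next
  case (Suc k)
  define x' where "x' = (\<lambda>s. x (s+1))"
  define g' where "g' = (\<lambda>s. g (s+1))"
  have ch: "chain \<alpha> k x'" "\<alpha> * x 2 < x 1" "x 1 \<le> x 2"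
    using chain_shift[OF Suc.prems(1)] by (auto simp: x'_def)
  have nn: "\<forall>s\<in>{1..k+1}. 0 \<le> x' s" using Suc.prems(2) by (auto simp: x'_def)
  note I0 = inv[OF assms, of k]
  note I1 = inv[OF assms, of "Suc k"]
  have u0: "0 \<le> 1 - WW \<alpha> (Suc k)" "0 \<le> WW \<alpha> (Suc k)" using I1 by auto
  have TS: "TT \<alpha> (Suc k) = WW \<alpha> (Suc k) + (1 - WW \<alpha> (Suc k)) * TT \<alpha> k" by (rule TT_Suc)
  define G where "G = (\<Sum>s\<in>{1..k+1}. pw \<alpha> k s * g' s)"
  have lhs: "(\<Sum>s\<in>{1..Suc k+1}. pw \<alpha> (Suc k) s * g s) = WW \<alpha> (Suc k) * g 1 + (1 - WW \<alpha> (Suc k)) * G"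
    unfolding pw_split G_def g'_def by simp
  show ?case
  proof (cases "r = 1")
    case True
    have g1: "g 1 = 0" using Suc.prems True by simp
    define S where "S = (\<Sum>s\<in>{1..k+1}. pw \<alpha> k s * x' s)"
    have "G \<le> (\<Sum>s\<in>{1..k+1}. pw \<alpha> k s * (x 1 + x' s))"
      unfolding G_def
    proof (rule sum_mono)
      fix s assume "s \<in> {1..k+1}"
      then have "g' s \<le> x 1 + x' s" using Suc.prems(5) True by (auto simp: g'_def x'_def)
      then show "pw \<alpha> k s * g' s \<le> pw \<alpha> k s * (x 1 + x' s)"
        using pw_nonneg[OF assms] by (rule mult_left_mono)
    qed
    also have "\<dots> = x 1 * (\<Sum>s\<in>{1..k+1}. pw \<alpha> k s) + S"
      by (simp add: S_def algebra_simps sum.distrib sum_distrib_left)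
    finally have GS: "G \<le> x 1 + S" using pw_sum by simp
    have x1: "0 \<le> x 1" using Suc.prems(2) by auto
    have SB: "S \<le> (2 * WW \<alpha> k + TT \<alpha> k) * x' 1" unfolding S_def by (rule blockB[OF assms ch(1) nn])
    show ?thesis
    proof (cases "\<alpha> = 0")
      case True
      then have "WW \<alpha> (Suc k) = 1" "0 \<le> TT \<alpha> (Suc k)" using I1 by auto
      then show ?thesis unfolding lhs using x1 g1 \<open>r = 1\<close> by simp
    next
      case False
      then have ap: "\<alpha> > 0" using assms by simp
      have E0: "0 \<le> 2 * WW \<alpha> k + TT \<alpha> k" using I0 by simp
      have "\<alpha> * S \<le> \<alpha> * ((2 * WW \<alpha> k + TT \<alpha> k) * x 2)"
        using SB ap by (simp add: x'_def numeral_2_eq_2)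
      also have "\<dots> = (2 * WW \<alpha> k + TT \<alpha> k) * (\<alpha> * x 2)" by simp
      also have "\<dots> \<le> (2 * WW \<alpha> k + TT \<alpha> k) * x 1"
        using ch(2) E0 by (intro mult_left_mono) auto
      finally have aS: "\<alpha> * S \<le> (2 * WW \<alpha> k + TT \<alpha> k) * x 1" .
      have "\<alpha> * ((1 - WW \<alpha> (Suc k)) * G) = (1 - WW \<alpha> (Suc k)) * (\<alpha> * G)" by simp
      also have "\<dots> \<le> (1 - WW \<alpha> (Suc k)) * (\<alpha> * x 1 + \<alpha> * S)"
        using GS ap u0 by (intro mult_left_mono) (auto simp: distrib_left[symmetric])
      also have "\<dots> \<le> (1 - WW \<alpha> (Suc k)) * (\<alpha> * x 1 + (2 * WW \<alpha> k + TT \<alpha> k) * x 1)"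
        using aS u0 by (intro mult_left_mono) auto
      also have "\<dots> = (1 - WW \<alpha> (Suc k)) * (\<alpha> + 2 * WW \<alpha> k + TT \<alpha> k) * x 1"
        by (simp add: algebra_simps)
      also have "\<dots> = \<alpha> * ((1 + TT \<alpha> (Suc k)) * x 1)" using ident[OF assms, of k] by simp
      finally have "(1 - WW \<alpha> (Suc k)) * G \<le> (1 + TT \<alpha> (Suc k)) * x 1" using ap by simp
      then show ?thesis unfolding lhs using g1 True \<open>r = 1\<close> by simp
    qed
  next
    case False
    then have r2: "r - 1 \<in> {1..k+1}" using Suc.prems(3) by auto
    have xr: "x' (r - 1) = x r" using False Suc.prems(3) by (simp add: x'_def)
    have G: "G \<le> (1 + TT \<alpha> k) * x r"
      unfolding G_def xr[symmetric]
    proof (rule Suc.IH[OF ch(1) nn r2])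
      show "g' (r - 1) = 0" using Suc.prems(4) False Suc.prems(3) by (simp add: g'_def)
      show "\<forall>s\<in>{1..k+1}. g' s \<le> x' (r - 1) + x' s"
        using Suc.prems(5) xr by (auto simp: g'_def x'_def)
    qed
    have x1r: "x 1 \<le> x r" using chain_mono[OF Suc.prems(1)] Suc.prems(3) by simp
    have g1: "g 1 \<le> 2 * x r" using Suc.prems(5) x1r by force
    have "WW \<alpha> (Suc k) * g 1 + (1 - WW \<alpha> (Suc k)) * G \<le>
          WW \<alpha> (Suc k) * (2 * x r) + (1 - WW \<alpha> (Suc k)) * ((1 + TT \<alpha> k) * x r)"
      using g1 G u0 by (intro add_mono mult_left_mono) auto
    also have "\<dots> = (1 + TT \<alpha> (Suc k)) * x r" unfolding TS by (simp add: algebra_simps)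
    finally show ?thesis unfolding lhs .
  qed
qed



lemma greedy:
  fixes s :: "'a \<Rightarrow> real" and key :: "'a \<Rightarrow> nat"
  assumes "finite A"
  shows "(\<forall>c\<in>A. 0 \<le> s c) \<Longrightarrow> 0 \<le> M \<Longrightarrow> M \<le> sum s A \<Longrightarrow>
    \<exists>g. (\<forall>c\<in>A. 0 \<le> g c \<and> g c \<le> s c) \<and> sum g A = M \<and>
        (\<forall>c\<in>A. \<forall>e\<in>A. 0 < g c \<and> g e < s e \<longrightarrow> key e \<le> key c)"
  using assms
proof (induction A arbitrary: M rule: finite_remove_induct)
  case empty
  then show ?case by (intro exI[of _ "\<lambda>_. 0"]) auto
next
  case (remove A)
  have "Max (key ` A) \<in> key ` A" using remove.hyps(1,2) by (intro Max_in) auto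
  then obtain z where z1: "z \<in> A" "key z = Max (key ` A)" by auto
  have z: "z \<in> A" "\<forall>e\<in>A. key e \<le> key z"
    using z1 remove.hyps(1) by auto
  show ?case
  proof (cases "M \<le> s z")
    case True
    define g where "g = (\<lambda>c. if c = z then M else 0::real)"
    have "sum g A = M" using z(1) remove.hyps(1) by (simp add: g_def)
    then show ?thesis using True remove.prems z
      by (intro exI[of _ g]) (auto simp: g_def)
  next
    case False
    have fin: "finite (A - {z})" using remove.hyps(1) by simp
    have sA: "sum s A = s z + sum s (A - {z})" using z(1) remove.hyps(1) by (simp add: sum.remove)
    obtain g where g: "\<forall>c\<in>A - {z}. 0 \<le> g c \<and> g c \<le> s c" "sum g (A - {z}) = M - s z"
      "\<forall>c\<in>A - {z}. \<forall>e\<in>A - {z}. 0 < g c \<and> g e < s e \<longrightarrow> key e \<le> key c"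
      using remove.IH[OF z(1), of "M - s z"] remove.prems False sA fin by auto
    define g' where "g' = g(z := s z)"
    have "sum g' A = s z + sum g' (A - {z})" using z(1) remove.hyps(1) by (simp add: sum.remove g'_def)
    also have "sum g' (A - {z}) = sum g (A - {z})" by (intro sum.cong) (auto simp: g'_def)
    finally have sg: "sum g' A = M" using g(2) by simp
    show ?thesis
    proof (intro exI[of _ g'] conjI ballI impI)
      fix c assume "c \<in> A"
      then show "0 \<le> g' c" "g' c \<le> s c" using g(1) remove.prems(1) by (auto simp: g'_def)
    next
      show "sum g' A = M" by (fact sg)
    next
      fix c e assume ce: "c \<in> A" "e \<in> A" "0 < g' c \<and> g' e < s e"
      then have "e \<noteq> z" by (auto simp: g'_def)
      show "key e \<le> key c"
      proof (cases "c = z")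
        case True then show ?thesis using z ce by simp
      next
        case False then show ?thesis using g(3) ce \<open>e \<noteq> z\<close> by (auto simp: g'_def)
      qed
    qed
  qed
qed

lemma veto:
  fixes s :: "'a \<Rightarrow> real" and key :: "'n \<Rightarrow> 'a \<Rightarrow> nat"
  assumes "finite N" "N \<noteq> {}" "finite A"
  shows "(\<forall>c\<in>A. 0 \<le> s c) \<Longrightarrow> sum s A = real (card N) \<Longrightarrow>
    \<exists>a\<in>A. 0 < s a \<and> (\<exists>v. (\<forall>i\<in>N. \<forall>c\<in>A. 0 \<le> v i c) \<and> (\<forall>i\<in>N. sum (v i) A = 1) \<and>
        (\<forall>c\<in>A. (\<Sum>i\<in>N. v i c) = s c) \<and> (\<forall>i\<in>N. \<forall>c\<in>A. 0 < v i c \<longrightarrow> key i a \<le> key i c))"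
  using assms(1,2)
proof (induction N arbitrary: s rule: finite_ne_induct)
  case (singleton i)
  have "sum s A = 1" using singleton by simp
  have ne: "{c\<in>A. 0 < s c} \<noteq> {}"
  proof
    assume "{c\<in>A. 0 < s c} = {}"
    then have "\<forall>c\<in>A. s c \<le> 0" by auto
    then have "sum s A \<le> 0" by (intro sum_nonpos) auto
    then show False using \<open>sum s A = 1\<close> by simp
  qed
  have fin: "finite {c\<in>A. 0 < s c}" using assms(3) by simp
  obtain a where a: "a \<in> {c\<in>A. 0 < s c}" "\<forall>c\<in>{c\<in>A. 0 < s c}. key i a \<le> key i c"
  proof -
    have "Min (key i ` {c\<in>A. 0 < s c}) \<in> key i ` {c\<in>A. 0 < s c}" using fin ne by (intro Min_in) auto
    then obtain a where "a \<in> {c\<in>A. 0 < s c}" "key i a = Min (key i ` {c\<in>A. 0 < s c})" by auto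
    then show ?thesis using that fin by auto
  qed
  show ?case
  proof (intro bexI[of _ a] conjI exI[of _ "\<lambda>_. s"])
    show "a \<in> A" "0 < s a" using a by auto
  qed (use singleton \<open>sum s A = 1\<close> a in auto)
next
  case (insert i N)
  have sA: "1 \<le> sum s A" using insert.prems(2) insert.hyps(1,3) by simp
  obtain g where g: "\<forall>c\<in>A. 0 \<le> g c \<and> g c \<le> s c" "sum g A = 1"
      "\<forall>c\<in>A. \<forall>e\<in>A. 0 < g c \<and> g e < s e \<longrightarrow> key i e \<le> key i c"
    using greedy[OF assms(3), of s 1 "key i"] insert.prems(1) sA by auto
  define s' where "s' = (\<lambda>c. s c - g c)"
  have s'0: "\<forall>c\<in>A. 0 \<le> s' c" using g(1) by (simp add: s'_def)
  have "sum s' A = real (card N)"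
    using insert.prems(2) insert.hyps(1,3) g(2) by (simp add: s'_def sum_subtractf)
  then obtain a v where a: "a \<in> A" "0 < s' a" and v: "\<forall>i\<in>N. \<forall>c\<in>A. 0 \<le> v i c" "\<forall>i\<in>N. sum (v i) A = 1"
      "\<forall>c\<in>A. (\<Sum>i\<in>N. v i c) = s' c" "\<forall>i\<in>N. \<forall>c\<in>A. 0 < v i c \<longrightarrow> key i a \<le> key i c"
    using insert.IH[OF s'0] by blast
  define v' where "v' = v(i := g)"
  show ?case
  proof (intro bexI[of _ a] conjI exI[of _ v'])
    show "a \<in> A" by (fact a(1))
    show "0 < s a" using a g(1) by (force simp: s'_def)
    show "\<forall>j\<in>insert i N. \<forall>c\<in>A. 0 \<le> v' j c" using v(1) g(1) by (auto simp: v'_def)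
    show "\<forall>j\<in>insert i N. sum (v' j) A = 1" using v(2) g(2) insert.hyps(3) by (auto simp: v'_def)
    show "\<forall>c\<in>A. (\<Sum>j\<in>insert i N. v' j c) = s c"
    proof
      fix c assume c: "c \<in> A"
      have "(\<Sum>j\<in>insert i N. v' j c) = g c + (\<Sum>j\<in>N. v' j c)"
        using insert.hyps(1,3) by (simp add: v'_def)
      also have "(\<Sum>j\<in>N. v' j c) = (\<Sum>j\<in>N. v j c)"
        using insert.hyps(3) by (intro sum.cong) (auto simp: v'_def)
      finally show "(\<Sum>j\<in>insert i N. v' j c) = s c" using v(3) c by (simp add: s'_def)
    qed
    show "\<forall>j\<in>insert i N. \<forall>c\<in>A. 0 < v' j c \<longrightarrow> key j a \<le> key j c"
    proof (intro ballI impI)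
      fix j c assume j: "j \<in> insert i N" and c: "c \<in> A" and pos: "0 < v' j c"
      show "key j a \<le> key j c"
      proof (cases "j = i")
        case True
        have "g a < s a" using a(2) by (simp add: s'_def)
        then show ?thesis using g(3) c a(1) pos True by (auto simp: v'_def)
      next
        case False
        then show ?thesis using v(4) j c pos by (auto simp: v'_def)
      qed
    qed
  qed
qed



lemma rank_unique:
  assumes "k \<in> {1..m-1}" "moderate_up_to m J k" "k' \<in> {1..m-1}" "moderate_up_to m J k'"
  shows "k = k'"
proof (rule ccontr)
  assume ne: "k \<noteq> k'"
  have gen: "False" if "a \<in> {1..m-1}" "moderate_up_to m J a" "b \<in> {1..m-1}" "moderate_up_to m J b" "a < b" for a b
  proof -
    have "a \<noteq> m - 1" using that by auto
    then have "J (a+1)" using that(2) by (simp add: moderate_up_to_def)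
    moreover have "a + 1 \<in> {1..b}" using that by auto
    moreover have "a + 1 \<in> {1..m-1}" using that by auto
    ultimately show False
    proof (cases "b = m - 1")
      case True
      then have "\<forall>j\<in>{1..m-1}. \<not> J j" using that(4) by (simp add: moderate_up_to_def)
      then show False using \<open>J (a+1)\<close> \<open>a + 1 \<in> {1..m-1}\<close> by blast
    next
      case False
      then have "\<forall>j\<in>{1..b}. \<not> J j" using that(4) by (simp add: moderate_up_to_def)
      then show False using \<open>J (a+1)\<close> \<open>a + 1 \<in> {1..b}\<close> by blast
    qed
  qed
  show False using ne gen[OF assms] gen[OF assms(3,4,1,2)] by linarith
qed

lemma rank_eq:
  assumes "k \<in> {1..m-1}" "moderate_up_to m J k"
  shows "intensity_rank m J = k"
  unfolding intensity_rank_def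
proof (rule the_equality)
  show "k \<in> {1..m-1} \<and> moderate_up_to m J k" using assms by simp
  fix k' assume "k' \<in> {1..m-1} \<and> moderate_up_to m J k'"
  then show "k' = k" using rank_unique[OF assms] by blast
qed

lemma moderate_facts:
  assumes "k \<in> {1..m-1}" "moderate_up_to m J k"
  shows "\<forall>s\<in>{1..k}. \<not> J s" "k < m - 1 \<Longrightarrow> J (k+1)"
proof -
  show "\<forall>s\<in>{1..k}. \<not> J s"
  proof (cases "k = m - 1")
    case True then show ?thesis using assms(2) by (simp add: moderate_up_to_def)
  next
    case False then show ?thesis using assms(2) by (simp add: moderate_up_to_def)
  qed
  show "J (k+1)" if "k < m - 1" using that assms(2) by (simp add: moderate_up_to_def)
qed

lemma agent_facts:
  assumes cons: "alpha_consistent \<alpha> m N A \<sigma> d" and vp: "valid_profile m N A \<sigma>"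
    and i: "i \<in> N" and al: "0 \<le> \<alpha>" "\<alpha> \<le> 1"
    and k: "k \<in> {1..m-1}" "moderate_up_to m (snd (\<sigma> i)) k"
  defines "x \<equiv> (\<lambda>s. d (Inl i) (Inr (fst (\<sigma> i) s)))"
  shows "\<forall>s\<in>{1..m}. 0 \<le> x s"
    and "\<And>s. 1 \<le> s \<Longrightarrow> s < m \<Longrightarrow> x s \<le> x (s+1)"
    and "chain \<alpha> k x"
    and "k < m - 1 \<Longrightarrow> x (k+1) \<le> \<alpha> * x (k+2)"
proof -
  have met: "is_metric_on d (Inl ` N \<union> Inr ` A)" using cons by (simp add: alpha_consistent_def)
  have bij: "bij_betw (fst (\<sigma> i)) {1..m} A" using vp i by (simp add: valid_profile_def)
  have inA: "fst (\<sigma> i) s \<in> A" if "s \<in> {1..m}" for s using bij that by (auto simp: bij_betw_def)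
  have m1: "\<forall>p\<in>Inl ` N \<union> Inr ` A. \<forall>q\<in>Inl ` N \<union> Inr ` A. 0 \<le> d p q"
    using met by (simp add: is_metric_on_def)
  show nn: "\<forall>s\<in>{1..m}. 0 \<le> x s"
  proof
    fix s assume "s \<in> {1..m}"
    then have "Inr (fst (\<sigma> i) s) \<in> Inl ` N \<union> Inr ` A" using inA by auto
    moreover have "Inl i \<in> Inl ` N \<union> Inr ` A" using i by auto
    ultimately show "0 \<le> x s" using m1 unfolding x_def by blast
  qed
  have C: "\<And>j. j \<in> {1..m-1} \<Longrightarrow>
        (\<not> snd (\<sigma> i) j \<longrightarrow> x (j+1) \<ge> x j \<and> x j > \<alpha> * x (j+1)) \<and>
        (snd (\<sigma> i) j \<longrightarrow> x j \<le> \<alpha> * x (j+1))"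
  proof -
    fix j assume j: "j \<in> {1..m-1}"
    have "\<forall>i\<in>N. \<forall>j\<in>{1..m-1}.
        let \<pi> = fst (\<sigma> i); J = snd (\<sigma> i) in
        (\<not> J j \<longrightarrow> d (Inl i) (Inr (\<pi> (j+1))) \<ge> d (Inl i) (Inr (\<pi> j)) \<and>
                    d (Inl i) (Inr (\<pi> j)) > \<alpha> * d (Inl i) (Inr (\<pi> (j+1)))) \<and>
        (J j \<longrightarrow> d (Inl i) (Inr (\<pi> j)) \<le> \<alpha> * d (Inl i) (Inr (\<pi> (j+1))))"
      using cons unfolding alpha_consistent_def by (elim conjE)
    then have "let \<pi> = fst (\<sigma> i); J = snd (\<sigma> i) in
        (\<not> J j \<longrightarrow> d (Inl i) (Inr (\<pi> (j+1))) \<ge> d (Inl i) (Inr (\<pi> j)) \<and>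
                    d (Inl i) (Inr (\<pi> j)) > \<alpha> * d (Inl i) (Inr (\<pi> (j+1)))) \<and>
        (J j \<longrightarrow> d (Inl i) (Inr (\<pi> j)) \<le> \<alpha> * d (Inl i) (Inr (\<pi> (j+1))))"
      using i j by blast
    then show "(\<not> snd (\<sigma> i) j \<longrightarrow> x (j+1) \<ge> x j \<and> x j > \<alpha> * x (j+1)) \<and>
        (snd (\<sigma> i) j \<longrightarrow> x j \<le> \<alpha> * x (j+1))" unfolding Let_def x_def .
  qed
  show st: "x s \<le> x (s+1)" if "1 \<le> s" "s < m" for s
  proof (cases "snd (\<sigma> i) s")
    case True
    then have "x s \<le> \<alpha> * x (s+1)" using C[of s] that by auto
    also have "\<dots> \<le> 1 * x (s+1)" using nn that al by (intro mult_right_mono) auto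
    finally show ?thesis by simp
  next
    case False then show ?thesis using C[of s] that by auto
  qed
  show "chain \<alpha> k x" unfolding chain_def
  proof
    fix s assume s: "s \<in> {1..k}"
    then have "\<not> snd (\<sigma> i) s" using moderate_facts(1)[OF k] by auto
    then show "\<alpha> * x (s+1) < x s \<and> x s \<le> x (s+1)" using C[of s] s k(1) by auto
  qed
  show "x (k+1) \<le> \<alpha> * x (k+2)" if "k < m - 1"
    using C[of "k+1"] moderate_facts(2)[OF k that] that k(1) by (auto simp: numeral_2_eq_2)
qed



lemma agent_bound:
  assumes cons: "alpha_consistent \<alpha> m N A \<sigma> d" and vp: "valid_profile m N A \<sigma>"
    and i: "i \<in> N" and al: "0 \<le> \<alpha>" "\<alpha> \<le> 1"
    and k: "k \<in> {1..m-1}" "moderate_up_to m (snd (\<sigma> i)) k" and b: "b \<in> A"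
  shows "(\<Sum>s\<in>{1..k+1}. pw \<alpha> k s * d (Inr b) (Inr (fst (\<sigma> i) s)))
          \<le> (1 + max \<alpha> (TT \<alpha> k)) * d (Inl i) (Inr b)"
proof -
  define x where "x = (\<lambda>s. d (Inl i) (Inr (fst (\<sigma> i) s)))"
  define g where "g = (\<lambda>s. d (Inr b) (Inr (fst (\<sigma> i) s)))"
  have F1: "\<forall>s\<in>{1..m}. 0 \<le> x s" using agent_facts(1)[OF cons vp i al k] by (simp add: x_def)
  have F2: "\<And>s. 1 \<le> s \<Longrightarrow> s < m \<Longrightarrow> x s \<le> x (s+1)"
    using agent_facts(2)[OF cons vp i al k] by (simp add: x_def)
  have F3: "chain \<alpha> k x" using agent_facts(3)[OF cons vp i al k] by (simp add: x_def)
  have F4: "k < m - 1 \<Longrightarrow> x (k+1) \<le> \<alpha> * x (k+2)"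
    using agent_facts(4)[OF cons vp i al k] by (simp add: x_def)
  note F = F1 F2 F3 F4
  have met: "is_metric_on d (Inl ` N \<union> Inr ` A)" using cons by (simp add: alpha_consistent_def)
  have bij: "bij_betw (fst (\<sigma> i)) {1..m} A" using vp i by (simp add: valid_profile_def)
  have inA: "fst (\<sigma> i) s \<in> A" if "s \<in> {1..m}" for s using bij that by (auto simp: bij_betw_def)
  obtain r where r: "r \<in> {1..m}" "fst (\<sigma> i) r = b" using bij b by (auto simp: bij_betw_def)
  have xr: "x r = d (Inl i) (Inr b)" using r by (simp add: x_def)
  have Si: "Inl i \<in> Inl ` N \<union> Inr ` A" using i by auto
  have Sb: "Inr b \<in> Inl ` N \<union> Inr ` A" using b by auto
  have gr: "g r = 0" using met Sb r by (simp add: g_def is_metric_on_def)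
  have gle: "g s \<le> x r + x s" if "s \<in> {1..m}" for s
  proof -
    have Ss: "Inr (fst (\<sigma> i) s) \<in> Inl ` N \<union> Inr ` A" using inA that by auto
    have "g s \<le> d (Inr b) (Inl i) + d (Inl i) (Inr (fst (\<sigma> i) s))"
      using met Sb Si Ss unfolding g_def is_metric_on_def by blast
    also have "d (Inr b) (Inl i) = d (Inl i) (Inr b)"
      using met Sb Si unfolding is_metric_on_def by blast
    finally show ?thesis using xr by (simp add: x_def)
  qed
  have km: "k + 1 \<le> m" using k(1) by auto
  have mono: "x p \<le> x q" if "1 \<le> p" "p \<le> q" "q \<le> m" for p q
    by (rule mono_steps[of 1 m x]) (use F(2) that in \<open>auto simp: x_def\<close>)
  have xr0: "0 \<le> x r" using F(1) r by auto
  have M: "(1 + TT \<alpha> k) * x r \<le> (1 + max \<alpha> (TT \<alpha> k)) * x r" "(1 + \<alpha>) * x r \<le> (1 + max \<alpha> (TT \<alpha> k)) * x r"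
    using xr0 by (auto intro: mult_right_mono)
  show ?thesis
  proof (cases "r \<le> k + 1")
    case True
    have "(\<Sum>s\<in>{1..k+1}. pw \<alpha> k s * g s) \<le> (1 + TT \<alpha> k) * x r"
      by (rule blockA[OF al F(3)]) (use F(1) km True r gr gle in auto)
    then show ?thesis using M(1) xr unfolding g_def by simp
  next
    case False
    then have km1: "k < m - 1" using r by auto
    have "(\<Sum>s\<in>{1..k+1}. pw \<alpha> k s * g s) \<le> (\<Sum>s\<in>{1..k+1}. pw \<alpha> k s * ((1 + \<alpha>) * x r))"
    proof (rule sum_mono)
      fix s assume s: "s \<in> {1..k+1}"
      have "x s \<le> x (k+1)" using s km by (intro mono) auto
      also have "\<dots> \<le> \<alpha> * x (k+2)" by (rule F(4)[OF km1])
      also have "\<dots> \<le> \<alpha> * x r" using False r al by (intro mult_left_mono mono) auto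
      finally have "g s \<le> (1 + \<alpha>) * x r" using gle[of s] s km by (simp add: algebra_simps)
      then show "pw \<alpha> k s * g s \<le> pw \<alpha> k s * ((1 + \<alpha>) * x r)"
        using pw_nonneg[OF al] by (rule mult_left_mono)
    qed
    also have "\<dots> = (\<Sum>s\<in>{1..k+1}. pw \<alpha> k s) * ((1 + \<alpha>) * x r)"
      by (rule sum_distrib_right[symmetric])
    also have "\<dots> = (1 + \<alpha>) * x r" by (simp only: pw_sum mult_1)
    finally show ?thesis using M(2) xr unfolding g_def by simp
  qed
qed

lemma pos_mono:
  assumes cons: "alpha_consistent \<alpha> m N A \<sigma> d" and vp: "valid_profile m N A \<sigma>"
    and i: "i \<in> N" and al: "0 \<le> \<alpha>" "\<alpha> \<le> 1"
    and k: "k \<in> {1..m-1}" "moderate_up_to m (snd (\<sigma> i)) k"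
    and a: "a \<in> A" and c: "c \<in> A"
    and le: "inv_into {1..m} (fst (\<sigma> i)) a \<le> inv_into {1..m} (fst (\<sigma> i)) c"
  shows "d (Inl i) (Inr a) \<le> d (Inl i) (Inr c)"
proof -
  define x where "x = (\<lambda>s. d (Inl i) (Inr (fst (\<sigma> i) s)))"
  have F1: "\<forall>s\<in>{1..m}. 0 \<le> x s" using agent_facts(1)[OF cons vp i al k] by (simp add: x_def)
  have F2: "\<And>s. 1 \<le> s \<Longrightarrow> s < m \<Longrightarrow> x s \<le> x (s+1)"
    using agent_facts(2)[OF cons vp i al k] by (simp add: x_def)
  have F3: "chain \<alpha> k x" using agent_facts(3)[OF cons vp i al k] by (simp add: x_def)
  have F4: "k < m - 1 \<Longrightarrow> x (k+1) \<le> \<alpha> * x (k+2)"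
    using agent_facts(4)[OF cons vp i al k] by (simp add: x_def)
  note F = F1 F2 F3 F4
  have bij: "bij_betw (fst (\<sigma> i)) {1..m} A" using vp i by (simp add: valid_profile_def)
  have im: "fst (\<sigma> i) ` {1..m} = A" using bij by (simp add: bij_betw_def)
  define p where "p = inv_into {1..m} (fst (\<sigma> i)) a"
  define q where "q = inv_into {1..m} (fst (\<sigma> i)) c"
  have a': "a \<in> fst (\<sigma> i) ` {1..m}" using a im by simp
  have c': "c \<in> fst (\<sigma> i) ` {1..m}" using c im by simp
  have p: "p \<in> {1..m}" "fst (\<sigma> i) p = a" unfolding p_def
    using inv_into_into[OF a'] f_inv_into_f[OF a'] by auto
  have q: "q \<in> {1..m}" "fst (\<sigma> i) q = c" unfolding q_def
    using inv_into_into[OF c'] f_inv_into_f[OF c'] by auto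
  have "x p \<le> x q"
    by (rule mono_steps[of 1 m x]) (use F(2) p q le in \<open>auto simp: p_def q_def x_def\<close>)
  then show ?thesis using p q by (simp add: x_def)
qed

lemma reindex:
  assumes bij: "bij_betw \<pi> {1..m} A" and km: "k + 1 \<le> m"
  shows "(\<Sum>c\<in>A. pw \<alpha> k (inv_into {1..m} \<pi> c) * h c) = (\<Sum>s\<in>{1..k+1}. pw \<alpha> k s * h (\<pi> s))"
proof -
  have inj: "inj_on \<pi> {1..m}" using bij by (simp add: bij_betw_def)
  have "(\<Sum>c\<in>A. pw \<alpha> k (inv_into {1..m} \<pi> c) * h c) =
        (\<Sum>s\<in>{1..m}. pw \<alpha> k (inv_into {1..m} \<pi> (\<pi> s)) * h (\<pi> s))"
    by (rule sum.reindex_bij_betw[OF bij, symmetric])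
  also have "\<dots> = (\<Sum>s\<in>{1..m}. pw \<alpha> k s * h (\<pi> s))"
    using inj by (intro sum.cong) (auto simp: inv_into_f_f)
  also have "\<dots> = (\<Sum>s\<in>{1..k+1}. pw \<alpha> k s * h (\<pi> s))"
    by (rule sum.mono_neutral_right) (use km in \<open>auto simp: pw_zero\<close>)
  finally show ?thesis .
qed



definition qv :: "real \<Rightarrow> nat \<Rightarrow> ('n \<Rightarrow> 'a pref) \<Rightarrow> 'n \<Rightarrow> 'a \<Rightarrow> real" where
  "qv \<alpha> m \<sigma> i c = pw \<alpha> (intensity_rank m (snd (\<sigma> i))) (inv_into {1..m} (fst (\<sigma> i)) c)"

definition scv :: "real \<Rightarrow> nat \<Rightarrow> 'n set \<Rightarrow> ('n \<Rightarrow> 'a pref) \<Rightarrow> 'a \<Rightarrow> real" where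
  "scv \<alpha> m N \<sigma> c = (\<Sum>i\<in>N. qv \<alpha> m \<sigma> i c)"

definition good :: "real \<Rightarrow> nat \<Rightarrow> 'n set \<Rightarrow> 'a set \<Rightarrow> ('n \<Rightarrow> 'a pref) \<Rightarrow> 'a \<Rightarrow> bool" where
  "good \<alpha> m N A \<sigma> a \<longleftrightarrow> a \<in> A \<and> (\<exists>v. (\<forall>i\<in>N. \<forall>c\<in>A. 0 \<le> v i c) \<and> (\<forall>i\<in>N. sum (v i) A = 1) \<and>
        (\<forall>c\<in>A. (\<Sum>i\<in>N. v i c) = scv \<alpha> m N \<sigma> c) \<and>
        (\<forall>i\<in>N. \<forall>c\<in>A. 0 < v i c \<longrightarrow>
            inv_into {1..m} (fst (\<sigma> i)) a \<le> inv_into {1..m} (fst (\<sigma> i)) c))"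

definition vrule :: "real \<Rightarrow> nat \<Rightarrow> 'n set \<Rightarrow> 'a set \<Rightarrow> ('n \<Rightarrow> 'a pref) \<Rightarrow> 'a" where
  "vrule \<alpha> m N A \<sigma> = (SOME a. good \<alpha> m N A \<sigma> a)"

lemma key_ineq:
  assumes cons: "alpha_consistent \<alpha> m N A \<sigma> d" and vp: "valid_profile m N A \<sigma>"
    and al: "0 \<le> \<alpha>" "\<alpha> \<le> 1"
    and md: "\<forall>i\<in>N. intensity_rank m (snd (\<sigma> i)) \<in> {1..m-1} \<and>
                  moderate_up_to m (snd (\<sigma> i)) (intensity_rank m (snd (\<sigma> i)))"
    and gd: "good \<alpha> m N A \<sigma> a" and b: "b \<in> A"
    and tau: "\<forall>i\<in>N. max \<alpha> (TT \<alpha> (intensity_rank m (snd (\<sigma> i)))) \<le> \<tau>"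
  shows "social_cost N d a \<le> (2 + \<tau>) * social_cost N d b"
proof -
  define l where "l = (\<lambda>i. intensity_rank m (snd (\<sigma> i)))"
  have a: "a \<in> A" using gd by (simp add: good_def)
  obtain v where v: "\<forall>i\<in>N. \<forall>c\<in>A. 0 \<le> v i c" "\<forall>i\<in>N. sum (v i) A = 1"
      "\<forall>c\<in>A. (\<Sum>i\<in>N. v i c) = scv \<alpha> m N \<sigma> c"
      "\<forall>i\<in>N. \<forall>c\<in>A. 0 < v i c \<longrightarrow> inv_into {1..m} (fst (\<sigma> i)) a \<le> inv_into {1..m} (fst (\<sigma> i)) c"
    using gd unfolding good_def by blast
  have fin: "finite N" "finite A" using vp by (auto simp: valid_profile_def)
  have met: "is_metric_on d (Inl ` N \<union> Inr ` A)" using cons by (simp add: alpha_consistent_def)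
  define dd where "dd = (\<lambda>i c. d (Inl i) (Inr c))"
  define D where "D = (\<lambda>c. d (Inr b) (Inr c))"
  have tri: "dd i c \<le> dd i b + D c" if "i \<in> N" "c \<in> A" for i c
  proof -
    have "Inl i \<in> Inl ` N \<union> Inr ` A" "Inr b \<in> Inl ` N \<union> Inr ` A" "Inr c \<in> Inl ` N \<union> Inr ` A"
      using that b by auto
    then show ?thesis using met unfolding is_metric_on_def dd_def D_def by blast
  qed
  have ddnn: "0 \<le> dd i b" if "i \<in> N" for i
  proof -
    have "Inl i \<in> Inl ` N \<union> Inr ` A" "Inr b \<in> Inl ` N \<union> Inr ` A" using that b by auto
    then show ?thesis using met unfolding is_metric_on_def dd_def by blast
  qed
  have step1: "dd i a \<le> (\<Sum>c\<in>A. v i c * (dd i b + D c))" if i: "i \<in> N" for i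
  proof -
    have "dd i a = (\<Sum>c\<in>A. v i c) * dd i a" using v(2) i by simp
    also have "\<dots> = (\<Sum>c\<in>A. v i c * dd i a)" by (rule sum_distrib_right)
    also have "\<dots> \<le> (\<Sum>c\<in>A. v i c * (dd i b + D c))"
    proof (rule sum_mono)
      fix c assume c: "c \<in> A"
      show "v i c * dd i a \<le> v i c * (dd i b + D c)"
      proof (cases "v i c = 0")
        case True then show ?thesis by simp
      next
        case False
        then have "0 < v i c" using v(1) i c by force
        then have "inv_into {1..m} (fst (\<sigma> i)) a \<le> inv_into {1..m} (fst (\<sigma> i)) c" using v(4) i c by blast
        then have "dd i a \<le> dd i c" unfolding dd_def
          using pos_mono[OF cons vp i al _ _ a c] md i by blast
        also have "\<dots> \<le> dd i b + D c" by (rule tri[OF i c])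
        finally show ?thesis using v(1) i c by (intro mult_left_mono) auto
      qed
    qed
    finally show ?thesis .
  qed
  have "social_cost N d a = (\<Sum>i\<in>N. dd i a)" by (simp add: social_cost_def dd_def)
  also have "\<dots> \<le> (\<Sum>i\<in>N. \<Sum>c\<in>A. v i c * (dd i b + D c))" using step1 by (rule sum_mono)
  also have "\<dots> = (\<Sum>i\<in>N. dd i b * (\<Sum>c\<in>A. v i c)) + (\<Sum>i\<in>N. \<Sum>c\<in>A. v i c * D c)"
    by (simp add: algebra_simps sum.distrib sum_distrib_left)
  also have "(\<Sum>i\<in>N. dd i b * (\<Sum>c\<in>A. v i c)) = (\<Sum>i\<in>N. dd i b)"
    using v(2) by (intro sum.cong) auto
  also have "(\<Sum>i\<in>N. \<Sum>c\<in>A. v i c * D c) = (\<Sum>c\<in>A. (\<Sum>i\<in>N. v i c) * D c)"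
    by (simp add: sum.swap[of _ N A] sum_distrib_right)
  also have "\<dots> = (\<Sum>c\<in>A. scv \<alpha> m N \<sigma> c * D c)"
    using v(3) by (intro sum.cong) auto
  also have "\<dots> = (\<Sum>i\<in>N. \<Sum>c\<in>A. qv \<alpha> m \<sigma> i c * D c)"
    by (simp add: scv_def sum_distrib_right sum.swap[of _ N A])
  also have "\<dots> \<le> (\<Sum>i\<in>N. (1 + \<tau>) * dd i b)"
  proof (rule sum_mono)
    fix i assume i: "i \<in> N"
    have k: "l i \<in> {1..m-1}" "moderate_up_to m (snd (\<sigma> i)) (l i)" using md i by (auto simp: l_def)
    have bij: "bij_betw (fst (\<sigma> i)) {1..m} A" using vp i by (simp add: valid_profile_def)
    have "(\<Sum>c\<in>A. qv \<alpha> m \<sigma> i c * D c) = (\<Sum>c\<in>A. pw \<alpha> (l i) (inv_into {1..m} (fst (\<sigma> i)) c) * D c)"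
      by (simp add: qv_def l_def)
    also have "\<dots> = (\<Sum>s\<in>{1..l i+1}. pw \<alpha> (l i) s * D (fst (\<sigma> i) s))"
      by (rule reindex[OF bij]) (use k(1) in auto)
    also have "\<dots> \<le> (1 + max \<alpha> (TT \<alpha> (l i))) * dd i b"
      unfolding D_def dd_def by (rule agent_bound[OF cons vp i al k b])
    also have "\<dots> \<le> (1 + \<tau>) * dd i b"
      using tau i ddnn[OF i] by (intro mult_right_mono) (auto simp: l_def)
    finally show "(\<Sum>c\<in>A. qv \<alpha> m \<sigma> i c * D c) \<le> (1 + \<tau>) * dd i b" .
  qed
  finally have "social_cost N d a \<le> (\<Sum>i\<in>N. dd i b) + (1 + \<tau>) * (\<Sum>i\<in>N. dd i b)"
    by (simp add: sum_distrib_left)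
  then show ?thesis by (simp add: social_cost_def dd_def algebra_simps)
qed



theorem theorem4:
  fixes m :: nat and \<alpha> :: real
  assumes "m \<ge> 2" and "0 \<le> \<alpha>" and "\<alpha> \<le> 1"
  shows "\<exists>f :: 'n set \<Rightarrow> 'a set \<Rightarrow> ('n \<Rightarrow> 'a pref) \<Rightarrow> 'a.
    \<forall>N A \<sigma>. valid_profile m N A \<sigma> \<and>
      (\<forall>i\<in>N. \<exists>k\<in>{1..m-1}. moderate_up_to m (snd (\<sigma> i)) k) \<longrightarrow>
      f N A \<sigma> \<in> A \<and>
      distortion \<alpha> m N A \<sigma> (f N A \<sigma>) \<le>
        ereal (2 + max \<alpha> (t_seq \<alpha> (Max ((\<lambda>i. intensity_rank m (snd (\<sigma> i))) ` N))))"
proof (intro exI[of _ "vrule \<alpha> m"] allI impI conjI)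
  fix N :: "'n set" and A :: "'a set" and \<sigma> :: "'n \<Rightarrow> 'a pref"
  assume H: "valid_profile m N A \<sigma> \<and> (\<forall>i\<in>N. \<exists>k\<in>{1..m-1}. moderate_up_to m (snd (\<sigma> i)) k)"
  have al: "0 \<le> \<alpha>" "\<alpha> \<le> 1" using assms by auto
  have vp: "valid_profile m N A \<sigma>" using H by simp
  have fin: "finite N" "N \<noteq> {}" "finite A" "card A = m" using vp by (auto simp: valid_profile_def)
  have Ane: "A \<noteq> {}" using fin(4) assms(1) by auto
  define l where "l = (\<lambda>i. intensity_rank m (snd (\<sigma> i)))"
  have md: "\<forall>i\<in>N. intensity_rank m (snd (\<sigma> i)) \<in> {1..m-1} \<and>
                  moderate_up_to m (snd (\<sigma> i)) (intensity_rank m (snd (\<sigma> i)))"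
  proof
    fix i assume "i \<in> N"
    then obtain k where k: "k \<in> {1..m-1}" "moderate_up_to m (snd (\<sigma> i)) k" using H by blast
    then show "intensity_rank m (snd (\<sigma> i)) \<in> {1..m-1} \<and>
                  moderate_up_to m (snd (\<sigma> i)) (intensity_rank m (snd (\<sigma> i)))"
      using rank_eq[OF k] by simp
  qed
  have sc0: "\<forall>c\<in>A. 0 \<le> scv \<alpha> m N \<sigma> c"
    unfolding scv_def qv_def using pw_nonneg[OF al] by (simp add: sum_nonneg)
  have scsum: "sum (scv \<alpha> m N \<sigma>) A = real (card N)"
  proof -
    have "sum (scv \<alpha> m N \<sigma>) A = (\<Sum>i\<in>N. \<Sum>c\<in>A. qv \<alpha> m \<sigma> i c * 1)"
      unfolding scv_def by (simp add: sum.swap[of _ N A])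
    also have "\<dots> = (\<Sum>i\<in>N. 1)"
    proof (rule sum.cong[OF refl])
      fix i assume i: "i \<in> N"
      have bij: "bij_betw (fst (\<sigma> i)) {1..m} A" using vp i by (simp add: valid_profile_def)
      have k: "l i \<in> {1..m-1}" using md i by (simp add: l_def)
      have "(\<Sum>c\<in>A. qv \<alpha> m \<sigma> i c * 1) = (\<Sum>c\<in>A. pw \<alpha> (l i) (inv_into {1..m} (fst (\<sigma> i)) c) * (\<lambda>_. 1) c)"
        by (simp add: qv_def l_def)
      also have "\<dots> = (\<Sum>s\<in>{1..l i+1}. pw \<alpha> (l i) s * (\<lambda>_. 1) (fst (\<sigma> i) s))"
        by (rule reindex[OF bij]) (use k in auto)
      also have "\<dots> = 1" using pw_sum by simp
      finally show "(\<Sum>c\<in>A. qv \<alpha> m \<sigma> i c * 1) = 1" .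
    qed
    finally show ?thesis by simp
  qed
  obtain a0 where "a0 \<in> A" "0 < scv \<alpha> m N \<sigma> a0" and
    "\<exists>v. (\<forall>i\<in>N. \<forall>c\<in>A. 0 \<le> v i c) \<and> (\<forall>i\<in>N. sum (v i) A = 1) \<and>
        (\<forall>c\<in>A. (\<Sum>i\<in>N. v i c) = scv \<alpha> m N \<sigma> c) \<and>
        (\<forall>i\<in>N. \<forall>c\<in>A. 0 < v i c \<longrightarrow>
            inv_into {1..m} (fst (\<sigma> i)) a0 \<le> inv_into {1..m} (fst (\<sigma> i)) c)"
    using veto[OF fin(1,2,3) sc0 scsum, of "\<lambda>i c. inv_into {1..m} (fst (\<sigma> i)) c"] by blast
  then have g0: "good \<alpha> m N A \<sigma> a0" by (simp add: good_def)
  have gd: "good \<alpha> m N A \<sigma> (vrule \<alpha> m N A \<sigma>)" unfolding vrule_def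
    by (rule someI[where P="good \<alpha> m N A \<sigma>", OF g0])
  then show "vrule \<alpha> m N A \<sigma> \<in> A" by (simp add: good_def)
  define lmax where "lmax = Max (l ` N)"
  have lmax: "lmax \<in> l ` N" unfolding lmax_def using fin by (intro Max_in) auto
  have lmax1: "1 \<le> lmax" using lmax md by (auto simp: l_def)
  have lle: "l i \<le> lmax" if "i \<in> N" for i unfolding lmax_def using fin that by (intro Max_ge) auto
  define \<tau> where "\<tau> = max \<alpha> (TT \<alpha> lmax)"
  have tau: "\<forall>i\<in>N. max \<alpha> (TT \<alpha> (intensity_rank m (snd (\<sigma> i)))) \<le> \<tau>"
  proof
    fix i assume i: "i \<in> N"
    show "max \<alpha> (TT \<alpha> (intensity_rank m (snd (\<sigma> i)))) \<le> \<tau>"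
      unfolding \<tau>_def using TT_mono[OF al lle[OF i]] by (simp add: l_def le_max_iff_disj; linarith)
  qed
  have teq: "t_seq \<alpha> (Max ((\<lambda>i. intensity_rank m (snd (\<sigma> i))) ` N)) = TT \<alpha> lmax"
    using t_seq_eq[OF al(1) lmax1] by (simp add: lmax_def l_def)
  show "distortion \<alpha> m N A \<sigma> (vrule \<alpha> m N A \<sigma>) \<le>
        ereal (2 + max \<alpha> (t_seq \<alpha> (Max ((\<lambda>i. intensity_rank m (snd (\<sigma> i))) ` N))))"
    unfolding distortion_def teq \<tau>_def[symmetric]
  proof (rule SUP_least)
    fix d assume "d \<in> {d. alpha_consistent \<alpha> m N A \<sigma> d}"
    then have cons: "alpha_consistent \<alpha> m N A \<sigma> d" by simp
    have met: "is_metric_on d (Inl ` N \<union> Inr ` A)" using cons by (simp add: alpha_consistent_def)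
    define M where "M = (MIN b\<in>A. social_cost N d b)"
    have "M \<in> (\<lambda>b. social_cost N d b) ` A" unfolding M_def using fin(3) Ane by (intro Min_in) auto
    then obtain b where b: "b \<in> A" "M = social_cost N d b" by auto
    have M0: "0 \<le> M" unfolding b(2) social_cost_def
    proof (rule sum_nonneg)
      fix i assume "i \<in> N"
      then have "Inl i \<in> Inl ` N \<union> Inr ` A" "Inr b \<in> Inl ` N \<union> Inr ` A" using b by auto
      then show "0 \<le> d (Inl i) (Inr b)" using met unfolding is_metric_on_def by blast
    qed
    have tau0: "0 \<le> \<tau>" using al by (simp add: \<tau>_def)
    have key: "social_cost N d (vrule \<alpha> m N A \<sigma>) \<le> (2 + \<tau>) * M"
      unfolding b(2) by (rule key_ineq[OF cons vp al md gd b(1) tau])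
    show "ereal (social_cost N d (vrule \<alpha> m N A \<sigma>) / M) \<le> ereal (2 + \<tau>)"
    proof (cases "M = 0")
      case True then show ?thesis using tau0 by simp
    next
      case False
      then have "0 < M" using M0 by simp
      then have "social_cost N d (vrule \<alpha> m N A \<sigma>) / M \<le> 2 + \<tau>"
        using key by (simp add: pos_divide_le_eq)
      then show ?thesis by simp
    qed
  qed
qed

end
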